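(* Let $0<\beta<1$, $p=\lceil\beta^{-1}\rceil-1$, and let $s,t$ be integers with $2\le t<s\le p+1$. Let $G$ be a graph of order $n$ with minimum degree $(1-\beta)n$. Then for every $S\in\mathcal{K}_s$, $$\sum_{T\in\mathcal{K}_t(S)}D_-(T)\ \ge\ (1-\beta)s\binom{s-2}{t-1}-(t-1)\binom{s-1}{t}+\binom{s-2}{t-2}D_-(S).$$ In particular, for $2\le t\le p$ and $S\in\mathcal{K}_{t+1}$, $\widetilde D(S)\ge 0$, where $\widetilde D(S)=\sum_{T\in\mathcal{K}_t(S)}D_-(T)-\big(2-(t+1)\beta+(t-1)D_-(S)\big)$.
   Context: All graphs are finite and simple. For a graph $G$, $\mathcal{K}_t$ denotes the set of $t$-cliques of $G$ (identified with their vertex sets); for a clique $S$, $\mathcal{K}_t(S)$ is the set of $t$-cliques contained in $S$. The degree $d(T)$ of a $t$-clique $T$ is the number of $(t+1)$-cliques containing $T$, and $D(T)=d(T)/n$ where $n=|V(G)|$. For $0<\beta<1$ with $p=\lceil\beta^{-1}\rceil-1$, and $T\in\mathcal{K}_t$ with $1\le t\le p+1$, define $D_-(T)=\min\{D(T),(p-t+1)\beta\}$. *)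

theory Defs
  imports Complex_Main
begin

text \<open>A finite simple graph is given by a finite vertex set V and a symmetric,
irreflexive adjacency relation E (only its restriction to V matters).\<close>

definition is_clique :: "('a \<Rightarrow> 'a \<Rightarrow> bool) \<Rightarrow> 'a set \<Rightarrow> bool" where
  "is_clique E S \<longleftrightarrow> (\<forall>x\<in>S. \<forall>y\<in>S. x \<noteq> y \<longrightarrow> E x y)"

definition cliques :: "'a set \<Rightarrow> ('a \<Rightarrow> 'a \<Rightarrow> bool) \<Rightarrow> nat \<Rightarrow> 'a set set" where
  "cliques V E t = {S. S \<subseteq> V \<and> finite S \<and> card S = t \<and> is_clique E S}"

definition cliques_in :: "'a set \<Rightarrow> ('a \<Rightarrow> 'a \<Rightarrow> bool) \<Rightarrow> nat \<Rightarrow> 'a set \<Rightarrow> 'a set set" where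
  "cliques_in V E t S = {T \<in> cliques V E t. T \<subseteq> S}"

definition clique_deg :: "'a set \<Rightarrow> ('a \<Rightarrow> 'a \<Rightarrow> bool) \<Rightarrow> 'a set \<Rightarrow> nat" where
  "clique_deg V E T = card {S \<in> cliques V E (card T + 1). T \<subseteq> S}"

definition Dnorm :: "'a set \<Rightarrow> ('a \<Rightarrow> 'a \<Rightarrow> bool) \<Rightarrow> 'a set \<Rightarrow> real" where
  "Dnorm V E T = real (clique_deg V E T) / real (card V)"

definition pval :: "real \<Rightarrow> nat" where
  "pval \<beta> = nat (\<lceil>1 / \<beta>\<rceil> - 1)"

definition Dminus :: "real \<Rightarrow> 'a set \<Rightarrow> ('a \<Rightarrow> 'a \<Rightarrow> bool) \<Rightarrow> 'a set \<Rightarrow> real" where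
  "Dminus \<beta> V E T = min (Dnorm V E T) ((real (pval \<beta>) - real (card T) + 1) * \<beta>)"

definition Dtilde :: "real \<Rightarrow> 'a set \<Rightarrow> ('a \<Rightarrow> 'a \<Rightarrow> bool) \<Rightarrow> nat \<Rightarrow> 'a set \<Rightarrow> real" where
  "Dtilde \<beta> V E t S = (\<Sum>T\<in>cliques_in V E t S. Dminus \<beta> V E T)
      - (2 - real (t + 1) * \<beta> + real (t - 1) * Dminus \<beta> V E S)"

end

theory Submission imports Defs begin

definition ind :: "bool \<Rightarrow> real" where "ind P = (if P then 1 else 0)"

lemma ind_nonneg[simp]: "0 \<le> ind P" by (simp add: ind_def)
lemma ind_le1: "ind P \<le> 1" by (simp add: ind_def)

lemma card_ind: "finite A \<Longrightarrow> real (card {x\<in>A. P x}) = (\<Sum>x\<in>A. ind (P x))"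
  using sum.inter_filter[of A "\<lambda>_. 1::real" P] by (simp add: ind_def)

lemma clique_subset: "is_clique E S \<Longrightarrow> T \<subseteq> S \<Longrightarrow> is_clique E T"
  unfolding is_clique_def by blast

lemma cliques_in_eq:
  assumes "S \<in> cliques V E s"
  shows "cliques_in V E t S = {T. T \<subseteq> S \<and> card T = t}"
  using assms unfolding cliques_in_def cliques_def
  by (auto intro: finite_subset clique_subset)

lemma sub_clique:
  assumes "S \<in> cliques V E s" "T \<subseteq> S"
  shows "T \<in> cliques V E (card T)"
  using assms unfolding cliques_def by (auto intro: finite_subset clique_subset)

lemma deg_eq:
  assumes symE: "\<And>x y. E x y \<Longrightarrow> E y x" and irrE: "\<And>x. \<not> E x x"
    and T: "T \<subseteq> V" "finite T" "is_clique E T"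
  shows "clique_deg V E T = card {w\<in>V. \<forall>x\<in>T. E w x}"
proof -
  let ?N = "{w\<in>V. \<forall>x\<in>T. E w x}"
  have eq: "{R \<in> cliques V E (card T + 1). T \<subseteq> R} = (\<lambda>w. insert w T) ` ?N"
  proof
    show "{R \<in> cliques V E (card T + 1). T \<subseteq> R} \<subseteq> (\<lambda>w. insert w T) ` ?N"
    proof
      fix R assume R: "R \<in> {R \<in> cliques V E (card T + 1). T \<subseteq> R}"
      then have RV: "R \<subseteq> V" and fR: "finite R" and cR: "card R = card T + 1"
        and clR: "is_clique E R" and TR: "T \<subseteq> R" unfolding cliques_def by auto
      have "card (R - T) = 1" using cR TR T(2) by (simp add: card_Diff_subset)
      then obtain w where w: "R - T = {w}" using card_1_singletonE by blast
      have Rw: "R = insert w T" using w TR by blast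
      have wV: "w \<in> V" using Rw RV by auto
      have "\<forall>x\<in>T. E w x" using clR w TR unfolding is_clique_def by (metis Diff_iff insertI1 subsetD)
      then show "R \<in> (\<lambda>w. insert w T) ` ?N" using Rw wV by blast
    qed
  next
    show "(\<lambda>w. insert w T) ` ?N \<subseteq> {R \<in> cliques V E (card T + 1). T \<subseteq> R}"
    proof
      fix R assume "R \<in> (\<lambda>w. insert w T) ` ?N"
      then obtain w where wV: "w \<in> V" and adj: "\<forall>x\<in>T. E w x" and R: "R = insert w T" by blast
      have wT: "w \<notin> T" using adj irrE by blast
      have "is_clique E R" using T(3) adj symE unfolding R is_clique_def by auto
      then show "R \<in> {R \<in> cliques V E (card T + 1). T \<subseteq> R}"
        using wV wT T unfolding R cliques_def by auto
    qed
  qed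
  have inj: "inj_on (\<lambda>w. insert w T) ?N"
  proof (rule inj_onI)
    fix a b assume a: "a \<in> ?N" and b: "b \<in> ?N" and ab: "insert a T = insert b T"
    have "a \<notin> T" "b \<notin> T" using a b irrE by auto
    then show "a = b" using ab by blast
  qed
  show ?thesis unfolding clique_deg_def eq using card_image[OF inj] by simp
qed

lemma pval_bound:
  assumes "0 < \<beta>"
  shows "(real (pval \<beta>) + 1) * \<beta> \<ge> 1"
proof -
  have "\<lceil>1/\<beta>\<rceil> \<ge> 1" using assms by simp
  then have "real (pval \<beta>) = real_of_int \<lceil>1/\<beta>\<rceil> - 1" unfolding pval_def by simp
  then have "real (pval \<beta>) + 1 \<ge> 1/\<beta>" by linarith
  then show ?thesis using assms by (simp add: divide_simps mult.commute)
qed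


lemma ind_T: "P \<Longrightarrow> ind P = 1" by (simp add: ind_def)

lemma sum_ge_one:
  assumes "finite B" "b \<in> B" "P b"
  shows "1 \<le> (\<Sum>x\<in>B. ind (P x))"
proof -
  have "ind (P b) \<le> (\<Sum>x\<in>B. ind (P x))" by (rule member_le_sum) (use assms in auto)
  moreover have "ind (P b) = 1" using assms(3) by (rule ind_T)
  ultimately show ?thesis by simp
qed

lemma pw1:
  assumes fC: "finite C" and fU: "finite U" and dj: "C \<inter> U = {}" and X: "X \<subseteq> C \<union> U"
  shows "2 \<le> 2 * ind (X = {}) + (\<Sum>v\<in>U. ind (X = {v})) + 2 * (\<Sum>x\<in>C. ind (x \<in> X)) + (\<Sum>x\<in>U. ind (x \<in> X))"
proof -
  have n0: "0 \<le> ind (X = {})" by simp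
  have n1: "0 \<le> (\<Sum>v\<in>U. ind (X = {v}))" by (rule sum_nonneg) simp
  have n2: "0 \<le> (\<Sum>x\<in>C. ind (x \<in> X))" by (rule sum_nonneg) simp
  have n3: "0 \<le> (\<Sum>x\<in>U. ind (x \<in> X))" by (rule sum_nonneg) simp
  show ?thesis
  proof (cases "X = {}")
    case True
    then have "ind (X = {}) = 1" by (rule ind_T)
    then show ?thesis using n1 n2 n3 by linarith
  next
    case ne: False
    show ?thesis
    proof (cases "\<exists>x\<in>C. x \<in> X")
      case True
      then obtain x where xC: "x \<in> C" and xX: "x \<in> X" by blast
      have "1 \<le> (\<Sum>x\<in>C. ind (x \<in> X))" by (rule sum_ge_one[OF fC xC]) (rule xX)
      then show ?thesis using n0 n1 n3 by linarith
    next
      case False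
      then have XU: "X \<subseteq> U" using X by blast
      show ?thesis
      proof (cases "\<exists>v. X = {v}")
        case True
        then obtain v where v: "X = {v}" by blast
        then have vU: "v \<in> U" using XU by auto
        have "1 \<le> (\<Sum>u\<in>U. ind (X = {u}))" by (rule sum_ge_one[OF fU vU]) (rule v)
        moreover have "1 \<le> (\<Sum>x\<in>U. ind (x \<in> X))" by (rule sum_ge_one[OF fU vU]) (simp add: v)
        ultimately show ?thesis using n0 n2 by linarith
      next
        case False
        obtain x where x: "x \<in> X" using ne by blast
        have "X \<noteq> {x}" using False by blast
        then obtain y where y: "y \<in> X" "y \<noteq> x" using x by auto
        have sub: "{x, y} \<subseteq> U" using x y XU by auto
        have "(\<Sum>z\<in>{x,y}. ind (z \<in> X)) \<le> (\<Sum>z\<in>U. ind (z \<in> X))"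
          by (rule sum_mono2[OF fU sub]) simp
        moreover have "(\<Sum>z\<in>{x,y}. ind (z \<in> X)) = ind (x \<in> X) + ind (y \<in> X)" using y by simp
        moreover have "ind (x \<in> X) = 1" "ind (y \<in> X) = 1" using x y by (auto intro: ind_T)
        ultimately show ?thesis using n0 n1 n2 by linarith
      qed
    qed
  qed
qed

lemma pw2:
  assumes fC: "finite C" and fU: "finite U" and cU: "card U \<le> 1" and X: "X \<subseteq> C \<union> U"
  shows "1 \<le> ind (X = {}) + (\<Sum>v\<in>U. ind (X = {v})) + (\<Sum>x\<in>C. ind (x \<in> X))"
proof -
  have n0: "0 \<le> ind (X = {})" by simp
  have n1: "0 \<le> (\<Sum>v\<in>U. ind (X = {v}))" by (rule sum_nonneg) simp
  have n2: "0 \<le> (\<Sum>x\<in>C. ind (x \<in> X))" by (rule sum_nonneg) simp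
  show ?thesis
  proof (cases "X = {}")
    case True
    then have "ind (X = {}) = 1" by (rule ind_T)
    then show ?thesis using n1 n2 by linarith
  next
    case ne: False
    show ?thesis
    proof (cases "\<exists>x\<in>C. x \<in> X")
      case True
      then obtain x where xC: "x \<in> C" and xX: "x \<in> X" by blast
      have "1 \<le> (\<Sum>x\<in>C. ind (x \<in> X))" by (rule sum_ge_one[OF fC xC]) (rule xX)
      then show ?thesis using n0 n1 by linarith
    next
      case False
      then have XU: "X \<subseteq> U" using X by blast
      obtain v where vX: "v \<in> X" using ne by blast
      then have vU: "v \<in> U" using XU by blast
      have "U = {v}"
      proof -
        have "card U \<noteq> 0" using vU fU by auto
        then have "card U = 1" using cU by simp
        then obtain u where "U = {u}" using card_1_singletonE by blast
        then show ?thesis using vU by simp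
      qed
      then have v: "X = {v}" using XU vX by blast
      have "1 \<le> (\<Sum>u\<in>U. ind (X = {u}))" by (rule sum_ge_one[OF fU vU]) (rule v)
      then show ?thesis using n0 n2 by linarith
    qed
  qed
qed

lemma base:
  fixes V :: "'a set" and E and \<beta> :: real and t :: nat
  assumes finV: "finite V" and symE: "\<And>x y. E x y \<Longrightarrow> E y x" and irrE: "\<And>x. \<not> E x x"
    and bpos: "0 < \<beta>"
    and mindeg: "\<And>v. v \<in> V \<Longrightarrow> real (card {u \<in> V. E v u}) \<ge> (1 - \<beta>) * real (card V)"
    and S: "S \<in> cliques V E (t+1)" and t1: "1 \<le> t"
  shows "(\<Sum>T\<in>cliques_in V E t S. Dminus \<beta> V E T) \<ge> 2 - real (t+1) * \<beta> + real (t-1) * Dminus \<beta> V E S"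
proof -
  have hp: "(real (pval \<beta>) + 1) * \<beta> \<ge> 1" using pval_bound[OF bpos] .
  define n where "n = real (card V)"
  define c where "c = (real (pval \<beta>) - real t + 1) * \<beta>"
  define A where "A w = {x\<in>S. \<not> E w x}" for w
  have SV: "S \<subseteq> V" and finS: "finite S" and cardS: "card S = t+1" and clS: "is_clique E S"
    using S unfolding cliques_def by auto
  have "S \<noteq> {}" using cardS by auto
  then have "V \<noteq> {}" using SV by auto
  then have npos: "n > 0" unfolding n_def using finV by (simp add: card_gt_0_iff)
  have cardSv: "\<And>v. v \<in> S \<Longrightarrow> card (S - {v}) = t" using cardS finS by simp
  have DT: "Dnorm V E (S - {v}) = (\<Sum>w\<in>V. ind (A w = {}) + ind (A w = {v})) / n" if v: "v \<in> S" for v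
  proof -
    have "clique_deg V E (S - {v}) = card {w\<in>V. \<forall>x\<in>S - {v}. E w x}"
      by (rule deg_eq[OF symE irrE]) (use SV finS clS clique_subset[of E S "S - {v}"] in auto)
    also have "{w\<in>V. \<forall>x\<in>S - {v}. E w x} = {w\<in>V. A w \<subseteq> {v}}" unfolding A_def by auto
    finally have "real (clique_deg V E (S - {v})) = (\<Sum>w\<in>V. ind (A w \<subseteq> {v}))"
      using card_ind[OF finV] by simp
    also have "\<dots> = (\<Sum>w\<in>V. ind (A w = {}) + ind (A w = {v}))"
      by (rule sum.cong) (auto simp: ind_def subset_singleton_iff)
    finally show ?thesis unfolding Dnorm_def n_def by simp
  qed
  have DS: "Dnorm V E S = (\<Sum>w\<in>V. ind (A w = {})) / n"
  proof -
    have "clique_deg V E S = card {w\<in>V. \<forall>x\<in>S. E w x}"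
      by (rule deg_eq[OF symE irrE]) (use SV finS clS in auto)
    also have "{w\<in>V. \<forall>x\<in>S. E w x} = {w\<in>V. A w = {}}" unfolding A_def by auto
    finally show ?thesis unfolding Dnorm_def n_def using card_ind[OF finV] by simp
  qed
  have DmS: "Dminus \<beta> V E S = min (Dnorm V E S) (c - \<beta>)"
    unfolding Dminus_def c_def cardS by (simp add: algebra_simps)
  have DmT: "Dminus \<beta> V E (S - {v}) = min (Dnorm V E (S - {v})) c" if "v \<in> S" for v
    unfolding Dminus_def c_def cardSv[OF that] by simp
  have reidx: "cliques_in V E t S = (\<lambda>v. S - {v}) ` S"
  proof -
    have "{T. T \<subseteq> S \<and> card T = t} = (\<lambda>v. S - {v}) ` S"
    proof
      show "{T. T \<subseteq> S \<and> card T = t} \<subseteq> (\<lambda>v. S - {v}) ` S"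
      proof
        fix T assume T: "T \<in> {T. T \<subseteq> S \<and> card T = t}"
        then have TS: "T \<subseteq> S" and cT: "card T = t" by auto
        have "finite T" using TS finS finite_subset by blast
        then have "card (S - T) = card S - card T" using TS by (simp add: card_Diff_subset)
        then have "card (S - T) = 1" using cT cardS by simp
        then obtain v where v: "S - T = {v}" using card_1_singletonE by blast
        then have "T = S - {v}" "v \<in> S" using T by auto
        then show "T \<in> (\<lambda>v. S - {v}) ` S" by blast
      qed
    next
      show "(\<lambda>v. S - {v}) ` S \<subseteq> {T. T \<subseteq> S \<and> card T = t}" using cardSv by auto
    qed
    then show ?thesis using cliques_in_eq[OF S] by simp
  qed
  have inj: "inj_on (\<lambda>v. S - {v}) S" by (rule inj_onI) auto
  have LHS0: "(\<Sum>T\<in>cliques_in V E t S. Dminus \<beta> V E T) = (\<Sum>v\<in>S. min (Dnorm V E (S - {v})) c)"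
    unfolding reidx sum.reindex[OF inj] by (rule sum.cong) (auto simp: DmT)
  have pervertex: "(\<Sum>w\<in>V. ind (x \<in> A w)) \<le> \<beta> * n" if x: "x \<in> S" for x
  proof -
    have xV: "x \<in> V" using x SV by auto
    have "{w\<in>V. x \<in> A w} = V - {u\<in>V. E x u}" unfolding A_def using x symE by auto
    then have "real (card {w\<in>V. x \<in> A w}) = n - real (card {u\<in>V. E x u})"
      unfolding n_def using finV by (simp add: card_Diff_subset of_nat_diff card_mono)
    then have "(\<Sum>w\<in>V. ind (x \<in> A w)) = n - real (card {u\<in>V. E x u})" using card_ind[OF finV] by simp
    then show ?thesis using mindeg[OF xV] unfolding n_def by (simp add: algebra_simps)
  qed
  define C where "C = {v\<in>S. Dnorm V E (S - {v}) \<ge> c}"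
  define U where "U = S - C"
  have CS: "C \<subseteq> S" unfolding C_def by auto
  have finC: "finite C" using CS finS finite_subset by blast
  have finU: "finite U" unfolding U_def using finS by simp
  have cardCU: "real (card C) + real (card U) = real t + 1"
  proof -
    have a: "card (S - C) = card S - card C" using finC CS by (simp add: card_Diff_subset)
    have b: "card C \<le> card S" by (rule card_mono[OF finS CS])
    show ?thesis unfolding U_def a using b cardS by (simp add: of_nat_diff)
  qed
  define N0 where "N0 = (\<Sum>w\<in>V. ind (A w = {}))"
  define Q1 where "Q1 = (\<Sum>v\<in>U. \<Sum>w\<in>V. ind (A w = {v}))"
  define PC where "PC = (\<Sum>x\<in>C. \<Sum>w\<in>V. ind (x \<in> A w))"
  define PU where "PU = (\<Sum>x\<in>U. \<Sum>w\<in>V. ind (x \<in> A w))"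
  have PCb: "PC \<le> real (card C) * (\<beta> * n)"
    unfolding PC_def using sum_bounded_above[of C "\<lambda>x. \<Sum>w\<in>V. ind (x \<in> A w)" "\<beta> * n"] pervertex CS
    by auto
  have PUb: "PU \<le> real (card U) * (\<beta> * n)"
    unfolding PU_def using sum_bounded_above[of U "\<lambda>x. \<Sum>w\<in>V. ind (x \<in> A w)" "\<beta> * n"] pervertex
    unfolding U_def by auto
  have LHS1: "(\<Sum>v\<in>S. min (Dnorm V E (S - {v})) c) = real (card C) * c + (real (card U) * N0 + Q1) / n"
  proof -
    have "(\<Sum>v\<in>S. min (Dnorm V E (S - {v})) c) = (\<Sum>v\<in>U. min (Dnorm V E (S - {v})) c) + (\<Sum>v\<in>C. min (Dnorm V E (S - {v})) c)"
      unfolding U_def using sum.subset_diff[OF CS finS] by simp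
    also have "(\<Sum>v\<in>C. min (Dnorm V E (S - {v})) c) = (\<Sum>v\<in>C. c)"
      by (rule sum.cong) (auto simp: C_def)
    also have "(\<Sum>v\<in>U. min (Dnorm V E (S - {v})) c) = (\<Sum>v\<in>U. (\<Sum>w\<in>V. ind (A w = {}) + ind (A w = {v})) / n)"
      by (rule sum.cong) (auto simp: U_def C_def DT)
    also have "\<dots> = (real (card U) * N0 + Q1) / n"
      by (simp add: sum_divide_distrib[symmetric] sum.distrib N0_def Q1_def)
    finally show ?thesis by simp
  qed
  have AS: "A w \<subseteq> C \<union> U" for w unfolding A_def U_def using CS by auto
  have dj: "C \<inter> U = {}" unfolding U_def by auto
  have swapC: "(\<Sum>w\<in>V. \<Sum>x\<in>C. ind (x \<in> A w)) = PC" unfolding PC_def by (rule sum.swap)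
  have swapU: "(\<Sum>w\<in>V. \<Sum>x\<in>U. ind (x \<in> A w)) = PU" unfolding PU_def by (rule sum.swap)
  have swapQ: "(\<Sum>w\<in>V. \<Sum>v\<in>U. ind (A w = {v})) = Q1" unfolding Q1_def by (rule sum.swap)
  have P1: "2 * n \<le> 2 * N0 + Q1 + 2 * PC + PU"
  proof -
    have "(\<Sum>w\<in>V. (2::real)) \<le> (\<Sum>w\<in>V. 2 * ind (A w = {}) + (\<Sum>v\<in>U. ind (A w = {v})) + 2 * (\<Sum>x\<in>C. ind (x \<in> A w)) + (\<Sum>x\<in>U. ind (x \<in> A w)))"
      by (rule sum_mono) (rule pw1[OF finC finU dj AS])
    also have "\<dots> = 2 * N0 + Q1 + 2 * PC + PU"
      unfolding sum.distrib sum_distrib_left[symmetric] swapC swapU swapQ N0_def by simp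
    finally show ?thesis unfolding n_def by simp
  qed
  have P2: "n \<le> N0 + Q1 + PC" if "card U \<le> 1"
  proof -
    have "(\<Sum>w\<in>V. (1::real)) \<le> (\<Sum>w\<in>V. ind (A w = {}) + (\<Sum>v\<in>U. ind (A w = {v})) + (\<Sum>x\<in>C. ind (x \<in> A w)))"
      by (rule sum_mono) (rule pw2[OF finC finU that AS])
    also have "\<dots> = N0 + Q1 + PC"
      unfolding sum.distrib swapC swapQ N0_def by simp
    finally show ?thesis unfolding n_def by simp
  qed
  define k where "k = real (card C)"
  define mu where "mu = real (card U)"
  define y0 where "y0 = N0 / n"
  define q where "q = Q1 / n"
  define m where "m = min y0 (c - \<beta>)"
  have y0n: "N0 = y0 * n" using npos unfolding y0_def by simp
  have qn: "Q1 = q * n" using npos unfolding q_def by simp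
  have LHS: "(\<Sum>T\<in>cliques_in V E t S. Dminus \<beta> V E T) = k * c + mu * y0 + q"
    unfolding LHS0 LHS1 k_def mu_def y0_def q_def by (simp add: add_divide_distrib)
  have DmS': "Dminus \<beta> V E S = m" unfolding DmS DS m_def y0_def N0_def ..
  have kmu: "k + mu = real t + 1" using cardCU unfolding k_def mu_def .
  have F1: "2 \<le> 2*y0 + q + 2*k*\<beta> + mu*\<beta>"
  proof -
    have "2*n \<le> 2*(y0*n) + q*n + 2*(k*(\<beta>*n)) + mu*(\<beta>*n)"
      using P1 PCb PUb unfolding y0n qn k_def mu_def by linarith
    also have "\<dots> = (2*y0 + q + 2*k*\<beta> + mu*\<beta>) * n" by (simp add: algebra_simps)
    finally show ?thesis using mult_le_cancel_right_pos[OF npos, of 2] by simp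
  qed
  have F2: "1 \<le> y0 + q + k*\<beta>" if "card U \<le> 1"
  proof -
    have "1*n \<le> y0*n + q*n + k*(\<beta>*n)"
      using P2[OF that] PCb unfolding y0n qn k_def by linarith
    also have "\<dots> = (y0 + q + k*\<beta>) * n" by (simp add: algebra_simps)
    finally show ?thesis using mult_le_cancel_right_pos[OF npos, of 1] by simp
  qed
  have hc2: "c + real t * \<beta> \<ge> 1" using hp unfolding c_def by (simp add: algebra_simps)
  have m1: "m \<le> c - \<beta>" "m \<le> y0" unfolding m_def by auto
  have tm: "0 \<le> (real t - 1) * ((c - \<beta>) - m)" using t1 m1 by simp
  have k0: "0 \<le> k" unfolding k_def by simp
  have goal: "k * c + mu * y0 + q \<ge> 2 - (real t + 1) * \<beta> + (real t - 1) * m"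
  proof (cases "card U = 0")
    case True
    then have "U = {}" using finU by simp
    then have q0: "q = 0" unfolding q_def Q1_def by simp
    have mu0: "mu = 0" unfolding mu_def using True by simp
    then have kk: "k = real t + 1" using kmu by simp
    have "k * c + mu * y0 + q - (2 - (real t + 1) * \<beta> + (real t - 1) * m)
        = 2 * (c + real t * \<beta> - 1) + (real t - 1) * ((c - \<beta>) - m)" (is "?X = ?Y")
      unfolding kk mu0 q0 by (simp add: algebra_simps)
    moreover have "0 \<le> ?Y" using hc2 tm by simp
    ultimately show ?thesis by linarith
  next
    case False
    show ?thesis
    proof (cases "card U = 1")
      case True
      have mu1: "mu = 1" unfolding mu_def using True by simp
      then have kk: "k = real t" using kmu by simp
      have f2: "1 \<le> y0 + q + k*\<beta>" using F2 True by simp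
      have "k * c + mu * y0 + q - (2 - (real t + 1) * \<beta> + (real t - 1) * m)
        = (y0 + q + k * \<beta> - 1) + (c + real t * \<beta> - 1) + (real t - 1) * ((c - \<beta>) - m)" (is "?X = ?Y")
        unfolding kk mu1 by (simp add: algebra_simps)
      moreover have "0 \<le> ?Y" using hc2 tm f2 by simp
      ultimately show ?thesis by linarith
    next
      case False
      then have mu2: "mu \<ge> 2" unfolding mu_def using \<open>card U \<noteq> 0\<close> by simp
      have kk: "mu = real t + 1 - k" using kmu by simp
      have "k * c + mu * y0 + q - (2 - (real t + 1) * \<beta> + (real t - 1) * m)
        = (q + 2*y0 + 2*k*\<beta> + mu*\<beta> - 2) + k * ((c - \<beta>) - m) + (mu - 2) * (y0 - m)" (is "?X = ?Y")
        unfolding kk by (simp add: algebra_simps)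
      moreover have "0 \<le> k * ((c - \<beta>) - m)" using k0 m1 by simp
      moreover have "0 \<le> (mu - 2) * (y0 - m)" using mu2 m1 by simp
      ultimately have "0 \<le> ?Y" using F1 by linarith
      with \<open>?X = ?Y\<close> show ?thesis by linarith
    qed
  qed
  have r1: "real (t+1) = real t + 1" "real (t-1) = real t - 1" using t1 by (auto simp: of_nat_diff)
  show ?thesis unfolding LHS DmS' r1 using goal by simp
qed

lemma binom_rel: "Suc k * (n choose Suc k) = (n - k) * (n choose k)"
  by (metis binomial_absorption binomial_absorb_comp)

lemma ident:
  fixes \<beta> :: real and s t :: nat
  assumes "2 \<le> t" "t < s"
  shows "real (s - t) * ((1 - \<beta>) * real s * real ((s - 2) choose (t - 1)) - real (t - 1) * real ((s - 1) choose t))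
     = real (s choose (t+1)) * (2 - real (t+1) * \<beta>)
       + real (t - 1) * ((1 - \<beta>) * real s * real ((s - 2) choose (t + 1 - 1)) - real (t + 1 - 1) * real ((s - 1) choose (t+1)))"
proof -
  have "t = (t-2)+2" "s = (t-2)+3+(s-t-1)" using assms by auto
  then obtain u r where t: "t = u + 2" and s: "s = u + 3 + r" by blast
  define X where "X = real ((u+1+r) choose (u+1))"
  define Y where "Y = real ((u+1+r) choose (u+2))"
  define Z where "Z = real ((u+1+r) choose (u+3))"
  have hYn: "(u+2) * ((u+1+r) choose (u+2)) = r * ((u+1+r) choose (u+1))"
    using binom_rel[of "u+1" "u+1+r"] by (simp add: numeral_2_eq_2)
  have hY: "real (u+2) * Y = real r * X"
    unfolding X_def Y_def by (metis hYn of_nat_mult)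
  have hZ: "real (u+3) * Z = (real r - 1) * Y"
  proof (cases r)
    case 0 then show ?thesis unfolding Z_def Y_def by (simp add: binomial_eq_0)
  next
    case (Suc r') 
    have "Suc (u+2) * ((u+1+r) choose Suc (u+2)) = ((u+1+r) - (u+2)) * ((u+1+r) choose (u+2))"
      by (rule binom_rel)
    then have "(u+3) * ((u+1+r) choose (u+3)) = r' * ((u+1+r) choose (u+2))"
      using Suc by (simp add: numeral_3_eq_3 numeral_2_eq_2)
    then have "real (u+3) * Z = real r' * Y" unfolding Z_def Y_def by (metis of_nat_mult)
    then show ?thesis using Suc by simp
  qed
  have c1: "(s - 2) choose (t - 1) = (u+1+r) choose (u+1)" using s t by simp
  have c2: "(s - 1) choose t = ((u+1+r) choose (u+1)) + ((u+1+r) choose (u+2))" using s t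
    by (simp add: numeral_3_eq_3 numeral_2_eq_2)
  have c3: "(s - 2) choose (t + 1 - 1) = (u+1+r) choose (u+2)" using s t by simp
  have c4: "(s - 1) choose (t+1) = ((u+1+r) choose (u+2)) + ((u+1+r) choose (u+3))" using s t
    by (simp add: numeral_3_eq_3 numeral_2_eq_2)
  have c5: "s choose (t+1) = ((u+1+r) choose (u+1)) + 2 * ((u+1+r) choose (u+2)) + ((u+1+r) choose (u+3))" using s t
    by (simp add: numeral_3_eq_3 numeral_2_eq_2)
  have e: "real (s - t) = real r + 1" "real (t - 1) = real u + 1" "real s = real u + 3 + real r"
    "real (t+1-1) = real u + 2" "real (t+1) = real u + 3" "real t = real u + 2" using s t by auto
  have Y': "Y = real r * X / (real u + 2)" using hY by (simp add: field_simps)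
  have hY2: "(real u + 2) * Y = real r * X" using hY by (simp add: add.commute)
  have hZ2: "(real u + 3) * Z = (real r - 1) * Y" using hZ by (simp add: add.commute)
  have Z0: "((real u + 2) * (real u + 3)) * Z = (real r - 1) * real r * X"
  proof -
    have "((real u + 2) * (real u + 3)) * Z = (real u + 2) * ((real u + 3) * Z)" by simp
    also have "\<dots> = (real r - 1) * ((real u + 2) * Y)" using hZ2 by simp
    also have "\<dots> = (real r - 1) * real r * X" using hY2 by simp
    finally show ?thesis .
  qed
  have nz: "(real u + 2) * (real u + 3) \<noteq> 0" by (simp add: add_pos_pos)
  have Z': "Z = (real r - 1) * real r * X / ((real u + 2) * (real u + 3))"
    using Z0 nz by (simp add: eq_divide_eq mult.commute)
  have key: "(real u + 2) * (real u + 3) * ((real r + 1) *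
     ((1 - \<beta>) * (real u + 3 + real r) * X - (real u + 1) * (X + Y)) -
     ((X + 2 * Y + Z) * (2 - (real u + 3) * \<beta>) +
     (real u + 1) * ((1 - \<beta>) * (real u + 3 + real r) * Y - (real u + 2) * (Y + Z)))) = 0"
    using hY2 hZ2 by algebra
  have key2: "(real r + 1) *
     ((1 - \<beta>) * (real u + 3 + real r) * X - (real u + 1) * (X + Y)) =
     ((X + 2 * Y + Z) * (2 - (real u + 3) * \<beta>) +
     (real u + 1) * ((1 - \<beta>) * (real u + 3 + real r) * Y - (real u + 2) * (Y + Z)))"
    using key nz by simp
  show ?thesis
    unfolding c1 c2 c3 c4 c5 e of_nat_add of_nat_mult of_nat_numeral e
    unfolding X_def[symmetric] Y_def[symmetric] Z_def[symmetric] of_nat_add of_nat_numeral e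
    using key2 by (simp add: add.assoc)
qed

lemma double_count:
  assumes S: "S \<in> cliques V E s" and ts: "t < s"
  shows "(\<Sum>R\<in>cliques_in V E (t+1) S. \<Sum>T\<in>cliques_in V E t R. f T) = real (s - t) * (\<Sum>T\<in>cliques_in V E t S. f T)"
proof -
  have finS: "finite S" and cS: "card S = s" using S unfolding cliques_def by auto
  define RR where "RR = {R. R \<subseteq> S \<and> card R = t+1}"
  define TT where "TT = {T. T \<subseteq> S \<and> card T = t}"
  have finRR: "finite RR" using finS by (intro finite_subset[of RR "Pow S"]) (auto simp: RR_def)
  have finTT: "finite TT" using finS by (intro finite_subset[of TT "Pow S"]) (auto simp: TT_def)
  have e1: "cliques_in V E (t+1) S = RR" unfolding RR_def by (rule cliques_in_eq[OF S])
  have e2: "cliques_in V E t S = TT" unfolding TT_def by (rule cliques_in_eq[OF S])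
  have e3: "cliques_in V E t R = {T\<in>TT. T \<subseteq> R}" if R: "R \<in> RR" for R
  proof -
    have "R \<subseteq> S" using R unfolding RR_def by auto
    then have "R \<in> cliques V E (card R)" by (rule sub_clique[OF S])
    then have "cliques_in V E t R = {T. T \<subseteq> R \<and> card T = t}" by (rule cliques_in_eq)
    then show ?thesis using R unfolding RR_def TT_def by auto
  qed
  have "(\<Sum>R\<in>RR. \<Sum>T\<in>cliques_in V E t R. f T) = (\<Sum>R\<in>RR. \<Sum>T\<in>TT. if T \<subseteq> R then f T else 0)"
    by (rule sum.cong) (simp_all add: e3 sum.inter_filter[OF finTT])
  also have "\<dots> = (\<Sum>T\<in>TT. \<Sum>R\<in>RR. if T \<subseteq> R then f T else 0)" by (rule sum.swap)
  also have "\<dots> = (\<Sum>T\<in>TT. f T * real (s - t))"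
  proof (rule sum.cong)
    fix T assume T: "T \<in> TT"
    then have TS: "T \<subseteq> S" and cT: "card T = t" unfolding TT_def by auto
    have finT: "finite T" using TS finS finite_subset by blast
    have "{R\<in>RR. T \<subseteq> R} = (\<lambda>x. insert x T) ` (S - T)"
    proof
      show "{R\<in>RR. T \<subseteq> R} \<subseteq> (\<lambda>x. insert x T) ` (S - T)"
      proof
        fix R assume R: "R \<in> {R\<in>RR. T \<subseteq> R}"
        then have RS: "R \<subseteq> S" and cR: "card R = t + 1" and TR: "T \<subseteq> R" unfolding RR_def by auto
        have "card (R - T) = card R - card T" using TR finT by (simp add: card_Diff_subset)
        then have "card (R - T) = 1" using cR cT by simp
        then obtain x where x: "R - T = {x}" using card_1_singletonE by blast
        then have "R = insert x T" "x \<in> S - T" using TR RS by auto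
        then show "R \<in> (\<lambda>x. insert x T) ` (S - T)" by blast
      qed
    next
      show "(\<lambda>x. insert x T) ` (S - T) \<subseteq> {R\<in>RR. T \<subseteq> R}"
        using TS finT cT unfolding RR_def by auto
    qed
    moreover have "inj_on (\<lambda>x. insert x T) (S - T)" by (rule inj_onI) auto
    ultimately have "card {R\<in>RR. T \<subseteq> R} = card (S - T)" by (simp add: card_image)
    also have "\<dots> = s - t" using TS finT cS cT by (simp add: card_Diff_subset)
    finally have cc: "card {R\<in>RR. T \<subseteq> R} = s - t" .
    have "(\<Sum>R\<in>RR. if T \<subseteq> R then f T else 0) = (\<Sum>R\<in>{R\<in>RR. T \<subseteq> R}. f T)"
      by (rule sum.inter_filter[OF finRR, symmetric])
    also have "\<dots> = f T * real (s - t)" using cc by simp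
    finally show "(\<Sum>R\<in>RR. if T \<subseteq> R then f T else 0) = f T * real (s - t)" .
  qed simp
  also have "\<dots> = (\<Sum>T\<in>TT. f T) * real (s - t)" by (rule sum_distrib_right[symmetric])
  finally show ?thesis unfolding e1 e2 by (metis mult.commute)
qed

lemma I1:
  assumes "2 \<le> t" "t \<le> s"
  shows "real (t - 1) * real ((s - 2) choose (t - 1)) = real (s - t) * real ((s - 2) choose (t - 2))"
proof -
  have "Suc (t-2) * ((s-2) choose Suc (t-2)) = ((s-2) - (t-2)) * ((s-2) choose (t-2))" by (rule binom_rel)
  moreover have "Suc (t-2) = t - 1" "(s-2) - (t-2) = s - t" using assms by auto
  ultimately have "(t - 1) * ((s-2) choose (t-1)) = (s - t) * ((s-2) choose (t-2))" by simp
  then show ?thesis by (metis of_nat_mult)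
qed

lemma general:
  fixes V :: "'a set" and E and \<beta> :: real
  assumes finV: "finite V" and symE: "\<And>x y. E x y \<Longrightarrow> E y x" and irrE: "\<And>x. \<not> E x x"
    and bpos: "0 < \<beta>"
    and mindeg: "\<And>v. v \<in> V \<Longrightarrow> real (card {u \<in> V. E v u}) \<ge> (1 - \<beta>) * real (card V)"
    and S: "S \<in> cliques V E s"
  shows "s - t = d \<Longrightarrow> 2 \<le> t \<Longrightarrow> t \<le> s \<Longrightarrow>
     (\<Sum>T\<in>cliques_in V E t S. Dminus \<beta> V E T)
              \<ge> (1 - \<beta>) * real s * real ((s - 2) choose (t - 1))
                 - real (t - 1) * real ((s - 1) choose t)
                 + real ((s - 2) choose (t - 2)) * Dminus \<beta> V E S"
proof (induction d arbitrary: t)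
  case 0
  then have ts: "t = s" by simp
  have finS: "finite S" and cS: "card S = s" using S unfolding cliques_def by auto
  have "{T. T \<subseteq> S \<and> card T = t} = {S}"
  proof
    show "{T. T \<subseteq> S \<and> card T = t} \<subseteq> {S}"
    proof
      fix T assume "T \<in> {T. T \<subseteq> S \<and> card T = t}"
      then have "T \<subseteq> S" "card T = card S" using ts cS by auto
      then have "T = S" using card_subset_eq[OF finS] by blast
      then show "T \<in> {S}" by simp
    qed
  qed (use ts cS in auto)
  then have cl: "cliques_in V E t S = {S}" unfolding cliques_in_eq[OF S] .
  have z: "real ((s - 2) choose (t - 1)) = 0" "real ((s - 1) choose t) = 0" "real ((s - 2) choose (t - 2)) = 1"
    using ts 0 by auto
  show ?case unfolding cl z by simp
next
  case (Suc d)
  define X where "X = (\<Sum>T\<in>cliques_in V E t S. Dminus \<beta> V E T)"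
  define Y where "Y = (\<Sum>R\<in>cliques_in V E (t+1) S. Dminus \<beta> V E R)"
  define x where "x = Dminus \<beta> V E S"
  have ts: "t < s" using Suc by simp
  have IH: "Y \<ge> (1 - \<beta>) * real s * real ((s - 2) choose (t + 1 - 1))
                 - real (t + 1 - 1) * real ((s - 1) choose (t + 1))
                 + real ((s - 2) choose (t + 1 - 2)) * x"
    unfolding Y_def x_def by (rule Suc.IH) (use Suc.prems in auto)
  have finS: "finite S" and cS: "card S = s" using S unfolding cliques_def by auto
  have cardR: "card (cliques_in V E (t+1) S) = s choose (t+1)"
    unfolding cliques_in_eq[OF S] using n_subsets[OF finS] cS by simp
  have "real (s - t) * X = (\<Sum>R\<in>cliques_in V E (t+1) S. \<Sum>T\<in>cliques_in V E t R. Dminus \<beta> V E T)"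
    unfolding X_def by (rule double_count[OF S ts, symmetric])
  also have "\<dots> \<ge> (\<Sum>R\<in>cliques_in V E (t+1) S. 2 - real (t+1) * \<beta> + real (t-1) * Dminus \<beta> V E R)"
  proof (rule sum_mono)
    fix R assume R: "R \<in> cliques_in V E (t+1) S"
    then have Rc: "R \<in> cliques V E (t+1)" unfolding cliques_in_def by simp
    have t1: "1 \<le> t" using Suc.prems by auto
    show "2 - real (t+1) * \<beta> + real (t-1) * Dminus \<beta> V E R \<le> (\<Sum>T\<in>cliques_in V E t R. Dminus \<beta> V E T)"
      using base[OF finV symE irrE bpos mindeg Rc t1] .
  qed
  finally have h1: "real (s - t) * X \<ge> real (s choose (t+1)) * (2 - real (t+1) * \<beta>) + real (t-1) * Y"
    unfolding Y_def using cardR by (simp add: sum.distrib sum_distrib_left)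
  have h2: "real (t-1) * Y \<ge> real (t-1) * ((1 - \<beta>) * real s * real ((s - 2) choose (t + 1 - 1))
                 - real (t + 1 - 1) * real ((s - 1) choose (t + 1))
                 + real ((s - 2) choose (t + 1 - 2)) * x)"
    using IH by (rule mult_left_mono) simp
  have id1: "real (s - t) * ((1 - \<beta>) * real s * real ((s - 2) choose (t - 1)) - real (t - 1) * real ((s - 1) choose t))
     = real (s choose (t+1)) * (2 - real (t+1) * \<beta>)
       + real (t - 1) * ((1 - \<beta>) * real s * real ((s - 2) choose (t + 1 - 1)) - real (t + 1 - 1) * real ((s - 1) choose (t+1)))"
    by (rule ident) (use Suc.prems ts in auto)
  have id2: "real (t - 1) * real ((s - 2) choose (t + 1 - 2)) = real (s - t) * real ((s - 2) choose (t - 2))"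
  proof -
    have "t + 1 - 2 = t - 1" using Suc.prems by simp
    then show ?thesis using I1[of t s] Suc.prems ts by simp
  qed
  define A where "A = (1 - \<beta>) * real s * real ((s - 2) choose (t - 1)) - real (t - 1) * real ((s - 1) choose t)"
  define B where "B = real ((s - 2) choose (t - 2))"
  have "real (s - t) * X \<ge> real (s - t) * (A + B * x)"
  proof -
    have "real (s - t) * (A + B * x) = real (s - t) * A + (real (t - 1) * real ((s - 2) choose (t + 1 - 2))) * x"
      unfolding B_def id2 by (simp add: algebra_simps)
    also have "\<dots> = real (s choose (t+1)) * (2 - real (t+1) * \<beta>)
       + real (t - 1) * ((1 - \<beta>) * real s * real ((s - 2) choose (t + 1 - 1)) - real (t + 1 - 1) * real ((s - 1) choose (t+1))
         + real ((s - 2) choose (t + 1 - 2)) * x)"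
      unfolding A_def id1 by (simp add: algebra_simps)
    finally show ?thesis using h1 h2 by linarith
  qed
  then have "X \<ge> A + B * x" using ts by (simp add: mult_le_cancel_left_pos)
  then show ?case unfolding X_def A_def B_def x_def by simp
qed

theorem mainTheorem11:
  fixes V :: "'a set" and E :: "'a \<Rightarrow> 'a \<Rightarrow> bool" and \<beta> :: real
  assumes finV: "finite V"
    and symE: "\<And>x y. E x y \<Longrightarrow> E y x"
    and irrE: "\<And>x. \<not> E x x"
    and beta: "0 < \<beta>" "\<beta> < 1"
    and mindeg: "\<And>v. v \<in> V \<Longrightarrow> real (card {u \<in> V. E v u}) \<ge> (1 - \<beta>) * real (card V)"
  shows "(\<forall>s t S. 2 \<le> t \<and> t < s \<and> s \<le> pval \<beta> + 1 \<and> S \<in> cliques V E s \<longrightarrow>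
            (\<Sum>T\<in>cliques_in V E t S. Dminus \<beta> V E T)
              \<ge> (1 - \<beta>) * real s * real ((s - 2) choose (t - 1))
                 - real (t - 1) * real ((s - 1) choose t)
                 + real ((s - 2) choose (t - 2)) * Dminus \<beta> V E S)
       \<and> (\<forall>t S. 2 \<le> t \<and> t \<le> pval \<beta> \<and> S \<in> cliques V E (t + 1) \<longrightarrow> Dtilde \<beta> V E t S \<ge> 0)"
proof (intro conjI allI impI)
  fix s t S assume h: "2 \<le> t \<and> t < s \<and> s \<le> pval \<beta> + 1 \<and> S \<in> cliques V E s"
  have Sc: "S \<in> cliques V E s" and t2: "2 \<le> t" and ts: "t \<le> s" using h by auto
  show "(\<Sum>T\<in>cliques_in V E t S. Dminus \<beta> V E T)
              \<ge> (1 - \<beta>) * real s * real ((s - 2) choose (t - 1))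
                 - real (t - 1) * real ((s - 1) choose t)
                 + real ((s - 2) choose (t - 2)) * Dminus \<beta> V E S"
    by (rule general[OF finV symE irrE beta(1) mindeg Sc refl t2 ts])
next
  fix t S assume h: "2 \<le> t \<and> t \<le> pval \<beta> \<and> S \<in> cliques V E (t + 1)"
  have Sc: "S \<in> cliques V E (t + 1)" and t1: "1 \<le> t" using h by auto
  have "(\<Sum>T\<in>cliques_in V E t S. Dminus \<beta> V E T) \<ge> 2 - real (t+1) * \<beta> + real (t-1) * Dminus \<beta> V E S"
    by (rule base[OF finV symE irrE beta(1) mindeg Sc t1])
  then show "Dtilde \<beta> V E t S \<ge> 0" unfolding Dtilde_def by simp
qed

end
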